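(* Let $r,s$ be positive integers, let $Q\subseteq [r]\times[s]$, and let $\phi_Q:\mathbb{K}[z_{jk} : (j,k)\in Q]\to \mathbb{K}[x_j,y_k : j\in[r],k\in[s]]$ be the ring homomorphism $z_{jk}\mapsto x_jy_k$, with kernel $I_Q=\ker(\phi_Q)$. Let $m=x_{j_1}x_{j_2}\cdots x_{j_d}$ be a monomial in $\mathbb{K}[x,y]$. Then \[ \phi_Q^{-1}(\langle m\rangle)=\langle z_{j_1k_1}z_{j_2k_2}\cdots z_{j_dk_d} : k_1,\dots,k_d\in[s],\ (j_\ell,k_\ell)\in Q \text{ for all } \ell\rangle + I_Q. \] Similarly, if $n=y_{k_1}y_{k_2}\cdots y_{k_d}$ is a monomial in $\mathbb{K}[x,y]$, then \[ \phi_Q^{-1}(\langle n\rangle)=\langle z_{j_1k_1}z_{j_2k_2}\cdots z_{j_dk_d} : j_1,\dots,j_d\in[r],\ (j_\ell,k_\ell)\in Q \text{ for all } \ell\rangle + I_Q. \]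
   Context: $\mathbb{K}$ is a field and $[r]=\{1,\dots,r\}$. Here $\langle m\rangle$ denotes the ideal of $\mathbb{K}[x,y]$ generated by $m$, and $\phi_Q^{-1}$ denotes the preimage (contraction) of an ideal under $\phi_Q$. *)

theory Defs
  imports "HOL-Library.Poly_Mapping"
begin

text \<open>Multivariate polynomials over a field with variables of type 'v,
  represented as finitely supported maps from monomials (exponent vectors)
  to coefficients; multiplication is the convolution product.\<close>

type_synonym ('v, 'k) mpoly = "('v \<Rightarrow>\<^sub>0 nat) \<Rightarrow>\<^sub>0 'k"

definition mvars :: "('v, 'k::zero) mpoly \<Rightarrow> 'v set" where
  "mvars p = \<Union> (Poly_Mapping.keys ` Poly_Mapping.keys p)"

definition polys_in :: "'v set \<Rightarrow> ('v, 'k::zero) mpoly set" where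
  "polys_in V = {p. mvars p \<subseteq> V}"

definition mconst :: "'k \<Rightarrow> ('v, 'k::zero) mpoly" where
  "mconst c = Poly_Mapping.single 0 c"

definition mvar :: "'v \<Rightarrow> ('v, 'k::{zero,one}) mpoly" where
  "mvar v = Poly_Mapping.single (Poly_Mapping.single v 1) 1"

definition msubst :: "('v \<Rightarrow> ('w, 'k::comm_ring_1) mpoly) \<Rightarrow> ('v, 'k) mpoly \<Rightarrow> ('w, 'k) mpoly" where
  "msubst \<sigma> p = sum (\<lambda>m. mconst (Poly_Mapping.lookup p m) * prod (\<lambda>v. \<sigma> v ^ Poly_Mapping.lookup m v) (Poly_Mapping.keys m)) (Poly_Mapping.keys p)"

definition ideal_gen :: "'a::comm_ring_1 set \<Rightarrow> 'a set \<Rightarrow> 'a set" where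
  "ideal_gen S G = {\<Sum>g\<in>F. c g * g | F c. finite F \<and> F \<subseteq> G \<and> (\<forall>g\<in>F. c g \<in> S)}"

definition set_plus_ideal :: "'a::plus set \<Rightarrow> 'a set \<Rightarrow> 'a set" where
  "set_plus_ideal I J = {a + b | a b. a \<in> I \<and> b \<in> J}"

text \<open>Variables of K[x,y]: Inl j is x_j, Inr k is y_k.\<close>
definition xy_vars :: "nat \<Rightarrow> nat \<Rightarrow> (nat + nat) set" where
  "xy_vars r s = Inl ` {1..r} \<union> Inr ` {1..s}"

definition phiQ :: "(nat \<times> nat, 'k::comm_ring_1) mpoly \<Rightarrow> (nat + nat, 'k) mpoly" where
  "phiQ = msubst (\<lambda>(j,k). mvar (Inl j) * mvar (Inr k))"

definition IQ :: "(nat \<times> nat) set \<Rightarrow> (nat \<times> nat, 'k::comm_ring_1) mpoly set" where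
  "IQ Q = {p \<in> polys_in Q. phiQ p = 0}"

definition phiQ_preimage :: "(nat \<times> nat) set \<Rightarrow> (nat + nat, 'k::comm_ring_1) mpoly set
    \<Rightarrow> (nat \<times> nat, 'k) mpoly set" where
  "phiQ_preimage Q J = {p \<in> polys_in Q. phiQ p \<in> J}"

end

theory Submission
  imports Defs
begin

definition mmono :: "('v \<Rightarrow> ('w, 'k::comm_ring_1) mpoly) \<Rightarrow> ('v \<Rightarrow>\<^sub>0 nat) \<Rightarrow> ('w, 'k) mpoly" where
  "mmono \<sigma> m = prod (\<lambda>v. \<sigma> v ^ Poly_Mapping.lookup m v) (Poly_Mapping.keys m)"

lemma msubst_mono: "msubst \<sigma> p = (\<Sum>m\<in>Poly_Mapping.keys p. mconst (Poly_Mapping.lookup p m) * mmono \<sigma> m)"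
  unfolding msubst_def mmono_def by simp

lemma mconst_0[simp]: "mconst 0 = 0" by (simp add: mconst_def)
lemma mconst_1[simp]: "mconst 1 = 1" by (simp add: mconst_def)
lemma mconst_add: "mconst (a + b) = mconst a + mconst b" by (simp add: mconst_def single_add)
lemma mconst_mult: "mconst (a * b) = (mconst a * mconst b :: ('v,'k::comm_ring_1) mpoly)"
  by (simp add: mconst_def mult_single)

lemma msubst_alt:
  assumes "finite S" "Poly_Mapping.keys p \<subseteq> S"
  shows "msubst \<sigma> p = (\<Sum>m\<in>S. mconst (Poly_Mapping.lookup p m) * mmono \<sigma> m)"
  unfolding msubst_mono
  by (rule sum.mono_neutral_left) (use assms in \<open>auto simp: in_keys_iff\<close>)

lemma mmono_alt:
  assumes "finite S" "Poly_Mapping.keys m \<subseteq> S"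
  shows "mmono \<sigma> m = (\<Prod>v\<in>S. \<sigma> v ^ Poly_Mapping.lookup m v)"
  unfolding mmono_def
  by (rule prod.mono_neutral_left) (use assms in \<open>auto simp: in_keys_iff\<close>)

lemma mono_add: "mmono \<sigma> (a + b) = mmono \<sigma> a * mmono \<sigma> b"
proof -
  let ?S = "Poly_Mapping.keys a \<union> Poly_Mapping.keys b"
  have "mmono \<sigma> (a + b) = (\<Prod>v\<in>?S. \<sigma> v ^ Poly_Mapping.lookup (a+b) v)"
    by (rule mmono_alt) (auto simp: keys_add)
  also have "\<dots> = (\<Prod>v\<in>?S. \<sigma> v ^ Poly_Mapping.lookup a v) * (\<Prod>v\<in>?S. \<sigma> v ^ Poly_Mapping.lookup b v)"
    by (simp add: lookup_add power_add prod.distrib)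
  also have "\<dots> = mmono \<sigma> a * mmono \<sigma> b"
    by (subst (1 2) mmono_alt[symmetric]) auto
  finally show ?thesis .
qed

lemma mono_0[simp]: "mmono \<sigma> 0 = 1" by (simp add: mmono_def)

lemma msubst_0[simp]: "msubst \<sigma> 0 = 0" by (simp add: msubst_def)

lemma msubst_add: "msubst \<sigma> (p + q) = msubst \<sigma> p + msubst \<sigma> q"
proof -
  let ?S = "Poly_Mapping.keys p \<union> Poly_Mapping.keys q"
  have "msubst \<sigma> (p + q) = (\<Sum>m\<in>?S. mconst (Poly_Mapping.lookup (p+q) m) * mmono \<sigma> m)"
    by (rule msubst_alt) (auto simp: keys_add)
  also have "\<dots> = (\<Sum>m\<in>?S. mconst (Poly_Mapping.lookup p m) * mmono \<sigma> m) + (\<Sum>m\<in>?S. mconst (Poly_Mapping.lookup q m) * mmono \<sigma> m)"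
    by (simp add: lookup_add mconst_add distrib_right sum.distrib)
  also have "\<dots> = msubst \<sigma> p + msubst \<sigma> q"
    by (subst (1 2) msubst_alt) auto
  finally show ?thesis .
qed

lemma msubst_sum: "msubst \<sigma> (sum f A) = (\<Sum>a\<in>A. msubst \<sigma> (f a))"
  by (induction A rule: infinite_finite_induct) (auto simp: msubst_add)

lemma msubst_single: "msubst \<sigma> (Poly_Mapping.single a c) = mconst c * mmono \<sigma> a"
  by (simp add: msubst_mono)

lemma poly_expand: "p = (\<Sum>a\<in>Poly_Mapping.keys p. Poly_Mapping.single a (Poly_Mapping.lookup p a))"
proof (rule poly_mapping_eqI)
  fix k
  have "(\<Sum>a\<in>Poly_Mapping.keys p. Poly_Mapping.lookup (Poly_Mapping.single a (Poly_Mapping.lookup p a)) k)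
      = (\<Sum>a\<in>Poly_Mapping.keys p. if a = k then Poly_Mapping.lookup p k else 0)"
    by (rule sum.cong) (auto simp: lookup_single)
  also have "\<dots> = Poly_Mapping.lookup p k"
    by (auto simp: in_keys_iff)
  finally show "Poly_Mapping.lookup p k = Poly_Mapping.lookup (\<Sum>a\<in>Poly_Mapping.keys p. Poly_Mapping.single a (Poly_Mapping.lookup p a)) k"
    by (simp add: lookup_sum)
qed

lemma msubst_mult: "msubst \<sigma> (p * q) = msubst \<sigma> p * msubst \<sigma> q"
proof -
  let ?A = "Poly_Mapping.keys p" and ?B = "Poly_Mapping.keys q"
  have "p * q = (\<Sum>a\<in>?A. Poly_Mapping.single a (Poly_Mapping.lookup p a)) * (\<Sum>b\<in>?B. Poly_Mapping.single b (Poly_Mapping.lookup q b))"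
    by (subst (1) poly_expand, subst (1) poly_expand[of q]) (rule refl)
  also have "\<dots> = (\<Sum>a\<in>?A. \<Sum>b\<in>?B. Poly_Mapping.single (a + b) (Poly_Mapping.lookup p a * Poly_Mapping.lookup q b))"
    by (simp add: sum_product mult_single)
  finally have "msubst \<sigma> (p * q) = (\<Sum>a\<in>?A. \<Sum>b\<in>?B. (mconst (Poly_Mapping.lookup p a) * mmono \<sigma> a) * (mconst (Poly_Mapping.lookup q b) * mmono \<sigma> b))"
    by (simp add: msubst_sum msubst_single mono_add mconst_mult ac_simps)
  also have "\<dots> = msubst \<sigma> p * msubst \<sigma> q"
    by (simp add: msubst_mono sum_product)
  finally show ?thesis .
qed

lemma msubst_1[simp]: "msubst \<sigma> 1 = 1"
  by (simp add: msubst_mono)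

lemma msubst_mvar[simp]: "msubst \<sigma> (mvar v) = \<sigma> v"
  by (simp add: msubst_mono mvar_def mmono_def)

lemma msubst_prod_list: "msubst \<sigma> (prod_list xs) = prod_list (map (msubst \<sigma>) xs)"
  by (induction xs) (auto simp: msubst_mult)

lemma polys_in_iff: "p \<in> polys_in V \<longleftrightarrow> (\<forall>m\<in>Poly_Mapping.keys p. Poly_Mapping.keys m \<subseteq> V)"
  by (auto simp: polys_in_def mvars_def)

lemma polys_in_0[simp]: "0 \<in> polys_in V" by (simp add: polys_in_iff)
lemma polys_in_1[simp]: "(1::('v,'k::comm_ring_1) mpoly) \<in> polys_in V"
  by (simp add: polys_in_iff)

lemma polys_in_add: "p \<in> polys_in V \<Longrightarrow> q \<in> polys_in V \<Longrightarrow> p + q \<in> polys_in V"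
  using keys_add[of p q] by (auto simp: polys_in_iff)

lemma polys_in_diff: "p \<in> polys_in V \<Longrightarrow> q \<in> polys_in V \<Longrightarrow> (p::('v,'k::comm_ring_1) mpoly) - q \<in> polys_in V"
  using keys_add[of p "-q"] by (auto simp: polys_in_iff)

lemma polys_in_mult: "p \<in> polys_in V \<Longrightarrow> q \<in> polys_in V \<Longrightarrow> (p::('v,'k::comm_ring_1) mpoly) * q \<in> polys_in V"
proof -
  assume a: "p \<in> polys_in V" "q \<in> polys_in V"
  show ?thesis unfolding polys_in_iff
  proof
    fix m assume "m \<in> Poly_Mapping.keys (p * q)"
    then obtain a b where "m = a + b" "a \<in> Poly_Mapping.keys p" "b \<in> Poly_Mapping.keys q"
      using keys_mult by blast
    then show "Poly_Mapping.keys m \<subseteq> V" using a keys_add[of a b] unfolding polys_in_iff by blast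
  qed
qed

lemma polys_in_sum: "(\<And>a. a \<in> A \<Longrightarrow> f a \<in> polys_in V) \<Longrightarrow> sum f A \<in> polys_in V"
  by (induction A rule: infinite_finite_induct) (auto intro: polys_in_add)

lemma polys_in_prod: "(\<And>a. a \<in> A \<Longrightarrow> f a \<in> polys_in V) \<Longrightarrow> (prod f A :: ('v,'k::comm_ring_1) mpoly) \<in> polys_in V"
  by (induction A rule: infinite_finite_induct) (auto intro: polys_in_mult)

lemma polys_in_power: "p \<in> polys_in V \<Longrightarrow> (p::('v,'k::comm_ring_1) mpoly) ^ n \<in> polys_in V"
  by (induction n) (auto intro: polys_in_mult)

lemma polys_in_prod_list: "(\<And>x. x \<in> set xs \<Longrightarrow> x \<in> polys_in V) \<Longrightarrow> (prod_list xs :: ('v,'k::comm_ring_1) mpoly) \<in> polys_in V"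
  by (induction xs) (auto intro: polys_in_mult)

lemma polys_in_mvar: "v \<in> V \<Longrightarrow> (mvar v :: ('v,'k::comm_ring_1) mpoly) \<in> polys_in V"
  by (simp add: polys_in_iff mvar_def)

lemma polys_in_mconst[simp]: "mconst c \<in> polys_in V"
  by (simp add: polys_in_iff mconst_def)

lemma polys_in_single: "Poly_Mapping.keys e \<subseteq> V \<Longrightarrow> Poly_Mapping.single e c \<in> polys_in V"
  by (simp add: polys_in_iff)

lemma polys_in_msubst:
  assumes "p \<in> polys_in U" "\<And>u. u \<in> U \<Longrightarrow> \<sigma> u \<in> polys_in V"
  shows "msubst \<sigma> p \<in> polys_in V"
  unfolding msubst_def
  using assms
  by (intro polys_in_sum polys_in_mult polys_in_prod polys_in_power polys_in_mconst)
     (fastforce simp: polys_in_iff)+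

lemma ideal_gen_0: "0 \<in> S \<Longrightarrow> 0 \<in> ideal_gen S G"
  unfolding ideal_gen_def by (rule CollectI, rule exI[of _ "{}"]) auto

lemma ideal_gen_gen: "c \<in> S \<Longrightarrow> g \<in> G \<Longrightarrow> c * g \<in> ideal_gen S G"
  unfolding ideal_gen_def by (rule CollectI, rule exI[of _ "{g}"], rule exI[of _ "\<lambda>_. c"]) auto

lemma ideal_gen_add:
  assumes S0: "0 \<in> S" and Sadd: "\<And>a b. a \<in> S \<Longrightarrow> b \<in> S \<Longrightarrow> a + b \<in> S"
    and x: "x \<in> ideal_gen S G" and y: "y \<in> ideal_gen S G"
  shows "x + y \<in> ideal_gen S G"
proof -
  from x obtain F1 c1 where F1: "x = (\<Sum>g\<in>F1. c1 g * g)" "finite F1" "F1 \<subseteq> G" "\<forall>g\<in>F1. c1 g \<in> S"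
    unfolding ideal_gen_def by blast
  from y obtain F2 c2 where F2: "y = (\<Sum>g\<in>F2. c2 g * g)" "finite F2" "F2 \<subseteq> G" "\<forall>g\<in>F2. c2 g \<in> S"
    unfolding ideal_gen_def by blast
  define d1 where "d1 g = (if g \<in> F1 then c1 g else 0)" for g
  define d2 where "d2 g = (if g \<in> F2 then c2 g else 0)" for g
  have e1: "(\<Sum>g\<in>F1\<union>F2. d1 g * g) = x"
  proof -
    have "(\<Sum>g\<in>F1\<union>F2. d1 g * g) = (\<Sum>g\<in>F1. d1 g * g)"
      by (rule sum.mono_neutral_right) (use F1(2) F2(2) in \<open>auto simp: d1_def\<close>)
    also have "\<dots> = x" unfolding F1(1) by (rule sum.cong) (auto simp: d1_def)
    finally show ?thesis .
  qed
  have e2: "(\<Sum>g\<in>F1\<union>F2. d2 g * g) = y"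
  proof -
    have "(\<Sum>g\<in>F1\<union>F2. d2 g * g) = (\<Sum>g\<in>F2. d2 g * g)"
      by (rule sum.mono_neutral_right) (use F1(2) F2(2) in \<open>auto simp: d2_def\<close>)
    also have "\<dots> = y" unfolding F2(1) by (rule sum.cong) (auto simp: d2_def)
    finally show ?thesis .
  qed
  have "x + y = (\<Sum>g\<in>F1\<union>F2. (d1 g + d2 g) * g)"
    by (simp add: e1[symmetric] e2[symmetric] distrib_right sum.distrib)
  moreover have "\<forall>g\<in>F1\<union>F2. d1 g + d2 g \<in> S"
    using F1(4) F2(4) S0 Sadd by (auto simp: d1_def d2_def)
  ultimately show ?thesis unfolding ideal_gen_def using F1(2,3) F2(2,3)
    by (intro CollectI exI[of _ "F1 \<union> F2"] exI[of _ "\<lambda>g. d1 g + d2 g"]) auto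
qed

lemma ideal_gen_sum:
  assumes S0: "0 \<in> S" and Sadd: "\<And>a b. a \<in> S \<Longrightarrow> b \<in> S \<Longrightarrow> a + b \<in> S"
  shows "(\<And>a. a \<in> A \<Longrightarrow> f a \<in> ideal_gen S G) \<Longrightarrow> sum f A \<in> ideal_gen S G"
  by (induction A rule: infinite_finite_induct) (auto intro: ideal_gen_add[OF S0 Sadd] ideal_gen_0[OF S0])

lemma ideal_gen_singleton_D: "x \<in> ideal_gen S {g} \<Longrightarrow> \<exists>c. x = c * g"
  unfolding ideal_gen_def
  by (auto simp: subset_singleton_iff) (metis mult_zero_left)

definition Eq :: "nat \<times> nat \<Rightarrow> ((nat + nat) \<Rightarrow>\<^sub>0 nat)" where
  "Eq q = Poly_Mapping.single (Inl (fst q)) 1 + Poly_Mapping.single (Inr (snd q)) 1"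

definition Phi :: "((nat \<times> nat) \<Rightarrow>\<^sub>0 nat) \<Rightarrow> ((nat + nat) \<Rightarrow>\<^sub>0 nat)" where
  "Phi a = (\<Sum>q\<in>Poly_Mapping.keys a. \<Sum>i\<in>{..<Poly_Mapping.lookup a q}. Eq q)"

definition mu :: "('a \<Rightarrow> 'b) \<Rightarrow> 'a list \<Rightarrow> ('b \<Rightarrow>\<^sub>0 nat)" where
  "mu g xs = sum_list (map (\<lambda>x. Poly_Mapping.single (g x) 1) xs)"

lemma mu_simps[simp]: "mu g [] = 0" "mu g (x # xs) = Poly_Mapping.single (g x) 1 + mu g xs"
  by (simp_all add: mu_def)

lemma prod_list_mvar: "prod_list (map (\<lambda>x. mvar (g x)) xs) = (Poly_Mapping.single (mu g xs) 1 :: ('v,'k::comm_ring_1) mpoly)"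
  by (induction xs) (simp_all add: mvar_def mult_single)

lemma single_pow: "(Poly_Mapping.single e (1::'k::comm_ring_1)) ^ n = Poly_Mapping.single (\<Sum>i\<in>{..<n}. e) 1"
  by (induction n) (simp_all add: mult_single add.commute)

lemma prod_single: "(\<Prod>x\<in>S. Poly_Mapping.single (e x) (1::'k::comm_ring_1)) = Poly_Mapping.single (\<Sum>x\<in>S. e x) 1"
  by (induction S rule: infinite_finite_induct) (simp_all add: mult_single)

definition sigQ :: "nat \<times> nat \<Rightarrow> (nat + nat, 'k::comm_ring_1) mpoly" where
  "sigQ = (\<lambda>(j,k). mvar (Inl j) * mvar (Inr k))"

lemma phiQ_sig: "phiQ = msubst sigQ" by (simp add: phiQ_def sigQ_def)

lemma sigQ_eq: "sigQ q = Poly_Mapping.single (Eq q) 1"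
  by (cases q) (simp add: sigQ_def Eq_def mvar_def mult_single)

lemma mmono_sigQ: "mmono sigQ a = Poly_Mapping.single (Phi a) 1"
  unfolding mmono_def sigQ_eq single_pow prod_single Phi_def ..

lemma phiQ_single: "phiQ (Poly_Mapping.single a c) = Poly_Mapping.single (Phi a) c"
  by (simp add: phiQ_sig msubst_single mmono_sigQ mconst_def mult_single)

lemma lookup_Phi: "Poly_Mapping.lookup (Phi a) v = (\<Sum>q\<in>Poly_Mapping.keys a. Poly_Mapping.lookup a q * Poly_Mapping.lookup (Eq q) v)"
  by (simp add: Phi_def lookup_sum)

lemma lookup_Phi_Q:
  assumes "finite Q" "Poly_Mapping.keys a \<subseteq> Q"
  shows "Poly_Mapping.lookup (Phi a) v = (\<Sum>q\<in>Q. Poly_Mapping.lookup a q * Poly_Mapping.lookup (Eq q) v)"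
  unfolding lookup_Phi
  by (rule sum.mono_neutral_left) (use assms in \<open>auto simp: in_keys_iff\<close>)

definition side :: "(nat \<Rightarrow> nat + nat) \<Rightarrow> (nat \<times> nat \<Rightarrow> nat) \<Rightarrow> bool" where
  "side ij f \<longleftrightarrow> (ij = Inl \<and> f = fst) \<or> (ij = Inr \<and> f = snd)"

lemma side_Eq: "side ij f \<Longrightarrow> Poly_Mapping.lookup (Eq q) (ij t) = (if f q = t then 1 else 0)"
  by (auto simp: side_def Eq_def lookup_add lookup_single)

lemma side_inj: "side ij f \<Longrightarrow> ij s = ij t \<longleftrightarrow> s = t"
  by (auto simp: side_def)

lemma mu_outside: "v \<notin> range g \<Longrightarrow> Poly_Mapping.lookup (mu g ts) v = 0"
  by (induction ts) (auto simp: lookup_add lookup_single when_def)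

lemma decomp:
  assumes "finite Q" "side ij f"
  shows "Poly_Mapping.keys a \<subseteq> Q \<Longrightarrow> (\<forall>v. Poly_Mapping.lookup (mu ij ts) v \<le> Poly_Mapping.lookup (Phi a) v)
    \<Longrightarrow> \<exists>ps e. map f ps = ts \<and> set ps \<subseteq> Q \<and> a = e + mu id ps"
proof (induction ts arbitrary: a)
  case Nil
  then show ?case by (intro exI[of _ "[]"] exI[of _ a]) simp
next
  case (Cons t ts)
  have "1 \<le> Poly_Mapping.lookup (mu ij (t # ts)) (ij t)"
    by (simp add: lookup_add)
  also have "\<dots> \<le> Poly_Mapping.lookup (Phi a) (ij t)" using Cons.prems by blast
  finally have "(\<Sum>q\<in>Poly_Mapping.keys a. Poly_Mapping.lookup a q * Poly_Mapping.lookup (Eq q) (ij t)) \<noteq> 0"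
    unfolding lookup_Phi by linarith
  then obtain q where q: "q \<in> Poly_Mapping.keys a" "Poly_Mapping.lookup a q * Poly_Mapping.lookup (Eq q) (ij t) \<noteq> 0"
    using sum.not_neutral_contains_not_neutral by blast
  have fq: "f q = t" using q(2) side_Eq[OF assms(2)] by (auto split: if_splits)
  have aq: "Poly_Mapping.lookup a q \<ge> 1" using q(1) by (simp add: in_keys_iff)
  define a' where "a' = a - Poly_Mapping.single q 1"
  have la': "Poly_Mapping.lookup a' x = Poly_Mapping.lookup a x - (if x = q then 1 else 0)" for x
    by (auto simp: a'_def lookup_minus lookup_single when_def)
  have a_eq: "a = a' + Poly_Mapping.single q 1"
    by (rule poly_mapping_eqI) (use aq in \<open>auto simp: la' lookup_add lookup_single when_def\<close>)
  have ka': "Poly_Mapping.keys a' \<subseteq> Q"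
    using Cons.prems(1) by (auto simp: in_keys_iff la' split: if_splits)
  have qQ: "q \<in> Q" using q(1) Cons.prems(1) by blast
  have Phi_a: "Poly_Mapping.lookup (Phi a) v = Poly_Mapping.lookup (Phi a') v + Poly_Mapping.lookup (Eq q) v" for v
  proof -
    have "Poly_Mapping.lookup (Phi a) v = (\<Sum>x\<in>Q. Poly_Mapping.lookup a x * Poly_Mapping.lookup (Eq x) v)"
      by (rule lookup_Phi_Q[OF assms(1) Cons.prems(1)])
    also have "\<dots> = (\<Sum>x\<in>Q. Poly_Mapping.lookup a' x * Poly_Mapping.lookup (Eq x) v + (if x = q then Poly_Mapping.lookup (Eq x) v else 0))"
      by (rule sum.cong) (use aq in \<open>auto simp: la' algebra_simps diff_mult_distrib\<close>)
    also have "\<dots> = Poly_Mapping.lookup (Phi a') v + Poly_Mapping.lookup (Eq q) v"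
      by (simp add: sum.distrib lookup_Phi_Q[OF assms(1) ka'] qQ assms(1))
    finally show ?thesis .
  qed
  have "\<forall>v. Poly_Mapping.lookup (mu ij ts) v \<le> Poly_Mapping.lookup (Phi a') v"
  proof
    fix v
    show "Poly_Mapping.lookup (mu ij ts) v \<le> Poly_Mapping.lookup (Phi a') v"
    proof (cases "v \<in> range ij")
      case True
      then obtain t' where v: "v = ij t'" by blast
      have "Poly_Mapping.lookup (mu ij (t # ts)) v \<le> Poly_Mapping.lookup (Phi a) v" using Cons.prems by blast
      then show ?thesis using v Phi_a[of v] side_Eq[OF assms(2), of q t'] side_inj[OF assms(2), of t t'] fq
        by (auto simp: lookup_add lookup_single when_def split: if_splits)
    next
      case False
      then show ?thesis by (simp add: mu_outside)
    qed
  qed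
  from Cons.IH[OF ka' this] obtain ps e where "map f ps = ts" "set ps \<subseteq> Q" "a' = e + mu id ps" by blast
  then show ?case using fq qQ a_eq
    by (intro exI[of _ "q # ps"] exI[of _ e]) (simp add: ac_simps id_def)
qed

lemma phiQ_polys:
  assumes "Q \<subseteq> {1..r} \<times> {1..s}" "p \<in> polys_in Q"
  shows "phiQ p \<in> polys_in (xy_vars r s)"
  unfolding phiQ_sig
proof (rule polys_in_msubst[OF assms(2)])
  fix u assume "u \<in> Q"
  then obtain j k where u: "u = (j,k)" "j \<in> {1..r}" "k \<in> {1..s}" using assms(1) by blast
  then show "sigQ u \<in> polys_in (xy_vars r s)"
    by (auto simp: sigQ_def xy_vars_def intro!: polys_in_mult polys_in_mvar)
qed

lemma sigQ_split:
  assumes "Q \<subseteq> {1..r} \<times> {1..s}" "side ij f" "q \<in> Q"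
  shows "\<exists>w \<in> xy_vars r s. sigQ q = mvar (ij (f q)) * mvar w"
proof -
  obtain j k where u: "q = (j,k)" "j \<in> {1..r}" "k \<in> {1..s}" using assms(1,3) by blast
  show ?thesis
  proof (cases "ij = Inl \<and> f = fst")
    case True
    then show ?thesis using u by (intro bexI[of _ "Inr k"]) (auto simp: sigQ_def xy_vars_def)
  next
    case False
    then have "ij = Inr \<and> f = snd" using assms(2) by (auto simp: side_def)
    then show ?thesis using u by (intro bexI[of _ "Inl j"]) (auto simp: sigQ_def xy_vars_def mult.commute)
  qed
qed

lemma phi_gen:
  assumes "Q \<subseteq> {1..r} \<times> {1..s}" "side ij f"
  shows "set ps \<subseteq> Q \<Longrightarrow> \<exists>y\<in>polys_in (xy_vars r s).
     prod_list (map sigQ ps) = prod_list (map (\<lambda>q. mvar (ij (f q))) ps) * (y :: (nat + nat, 'k::comm_ring_1) mpoly)"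
proof (induction ps)
  case Nil
  then show ?case by (intro bexI[of _ 1]) auto
next
  case (Cons q ps)
  then obtain y where y: "y \<in> polys_in (xy_vars r s)" "prod_list (map sigQ ps) = prod_list (map (\<lambda>q. mvar (ij (f q))) ps) * (y :: (nat + nat, 'k::comm_ring_1) mpoly)"
    by auto
  obtain w where w: "w \<in> xy_vars r s" "(sigQ q :: (nat + nat, 'k) mpoly) = mvar (ij (f q)) * mvar w"
    using sigQ_split[OF assms, of q] Cons.prems by auto
  have "prod_list (map sigQ (q # ps)) = prod_list (map (\<lambda>q. mvar (ij (f q))) (q # ps)) * (mvar w * y)"
    unfolding list.map prod_list.Cons y(2) w(2) by (simp only: ac_simps)
  then show ?case
    by (intro bexI[of _ "mvar w * y"]) (use y w in \<open>auto intro: polys_in_mult polys_in_mvar\<close>)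
qed

lemma main:
  fixes Q :: "(nat \<times> nat) set" and ts :: "nat list"
  assumes Qsub: "Q \<subseteq> {1..r} \<times> {1..s}" and sd: "side ij f"
  shows "phiQ_preimage Q (ideal_gen (polys_in (xy_vars r s)) {prod_list (map (\<lambda>t. mvar (ij t)) ts)})
     = set_plus_ideal (ideal_gen (polys_in Q) {prod_list (map mvar ps) | ps. map f ps = ts \<and> set ps \<subseteq> Q})
         (IQ Q :: (nat \<times> nat, 'k::comm_ring_1) mpoly set)"
    (is "?L = set_plus_ideal (ideal_gen _ ?G) _")
proof -
  let ?m = "prod_list (map (\<lambda>t. mvar (ij t)) ts) :: (nat + nat, 'k) mpoly"
  let ?XY = "polys_in (xy_vars r s) :: (nat + nat, 'k) mpoly set"
  have finQ: "finite Q" using Qsub by (rule finite_subset) auto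
  have G_sub: "?G \<subseteq> polys_in Q"
    by (auto intro!: polys_in_prod_list polys_in_mvar)
  have RL: "set_plus_ideal (ideal_gen (polys_in Q) ?G) (IQ Q) \<subseteq> ?L"
  proof
    fix x assume "x \<in> set_plus_ideal (ideal_gen (polys_in Q) ?G) (IQ Q)"
    then obtain a b where x: "x = a + b" and a: "a \<in> ideal_gen (polys_in Q) ?G" and b: "b \<in> IQ Q"
      unfolding set_plus_ideal_def by blast
    from a obtain F c where F: "a = (\<Sum>g\<in>F. c g * g)" "finite F" "F \<subseteq> ?G" "\<forall>g\<in>F. c g \<in> polys_in Q"
      unfolding ideal_gen_def by blast
    have aQ: "a \<in> polys_in Q" unfolding F(1)
      using F(3,4) G_sub by (intro polys_in_sum polys_in_mult) auto
    have bQ: "b \<in> polys_in Q" "phiQ b = 0" using b by (auto simp: IQ_def)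
    have "\<forall>g\<in>F. \<exists>y\<in>?XY. phiQ g = y * ?m"
    proof
      fix g assume "g \<in> F"
      then obtain ps where ps: "g = prod_list (map mvar ps)" "map f ps = ts" "set ps \<subseteq> Q" using F(3) by blast
      obtain y where y: "y \<in> ?XY" "prod_list (map sigQ ps) = prod_list (map (\<lambda>q. mvar (ij (f q))) ps) * y"
        using phi_gen[OF Qsub sd ps(3)] by blast
      have e1: "phiQ g = prod_list (map sigQ ps)"
        by (simp add: ps(1) phiQ_sig msubst_prod_list comp_def)
      have e2: "prod_list (map (\<lambda>q. mvar (ij (f q))) ps) = ?m"
        unfolding ps(2)[symmetric] by (simp add: comp_def)
      show "\<exists>y\<in>?XY. phiQ g = y * ?m" using y e1 e2 by (intro bexI[of _ y]) (simp_all add: mult.commute)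
    qed
    then obtain Y where Y: "\<forall>g\<in>F. Y g \<in> ?XY \<and> phiQ g = Y g * ?m"
      using bchoice[of F "\<lambda>g y. y \<in> ?XY \<and> phiQ g = y * ?m"] by blast
    have "phiQ x = phiQ a" using bQ by (simp add: x phiQ_sig msubst_add)
    also have "\<dots> = (\<Sum>g\<in>F. phiQ (c g) * (Y g * ?m))"
      unfolding F(1) phiQ_sig msubst_sum msubst_mult using Y
      by (intro sum.cong) (auto simp: phiQ_sig)
    also have "\<dots> = (\<Sum>g\<in>F. phiQ (c g) * Y g) * ?m"
      by (simp add: sum_distrib_right mult.assoc)
    finally have "phiQ x = (\<Sum>g\<in>F. phiQ (c g) * Y g) * ?m" .
    moreover have "(\<Sum>g\<in>F. phiQ (c g) * Y g) \<in> ?XY"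
      using Y F(4) by (intro polys_in_sum polys_in_mult phiQ_polys[OF Qsub]) auto
    ultimately have "phiQ x \<in> ideal_gen ?XY {?m}" by (auto intro: ideal_gen_gen)
    moreover have "x \<in> polys_in Q" using aQ bQ x by (simp add: polys_in_add)
    ultimately show "x \<in> ?L" by (simp add: phiQ_preimage_def)
  qed
  have LR: "?L \<subseteq> set_plus_ideal (ideal_gen (polys_in Q) ?G) (IQ Q)"
  proof
    fix p assume "p \<in> ?L"
    then have pQ: "p \<in> polys_in Q" and pI: "phiQ p \<in> ideal_gen ?XY {?m}"
      by (auto simp: phiQ_preimage_def)
    define A where "A = Poly_Mapping.keys p"
    define good where "good a \<longleftrightarrow> (\<forall>v. Poly_Mapping.lookup (mu ij ts) v \<le> Poly_Mapping.lookup (Phi a) v)" for a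
    define h where "h = (\<Sum>a\<in>{a\<in>A. good a}. Poly_Mapping.single a (Poly_Mapping.lookup p a))"
    define i where "i = (\<Sum>a\<in>{a\<in>A. \<not> good a}. Poly_Mapping.single a (Poly_Mapping.lookup p a))"
    have finA: "finite A" by (simp add: A_def)
    have kA: "a \<in> A \<Longrightarrow> Poly_Mapping.keys a \<subseteq> Q" for a using pQ by (auto simp: A_def polys_in_iff)
    have p_eq: "p = h + i"
    proof -
      have "A = {a\<in>A. good a} \<union> {a\<in>A. \<not> good a}" by blast
      then have "p = (\<Sum>a\<in>{a\<in>A. good a} \<union> {a\<in>A. \<not> good a}. Poly_Mapping.single a (Poly_Mapping.lookup p a))"
        using poly_expand[of p] unfolding A_def by simp
      also have "\<dots> = h + i" unfolding h_def i_def
        by (rule sum.union_disjoint) (use finA in auto)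
      finally show ?thesis .
    qed
    have hI: "h \<in> ideal_gen (polys_in Q) ?G" unfolding h_def
    proof (rule ideal_gen_sum[OF polys_in_0 polys_in_add])
      fix a assume "a \<in> {a\<in>A. good a}"
      then have a: "a \<in> A" "good a" by auto
      obtain ps e where pe: "map f ps = ts" "set ps \<subseteq> Q" "a = e + mu id ps"
        using decomp[OF finQ sd kA[OF a(1)]] a(2) unfolding good_def by blast
      have ke: "Poly_Mapping.keys e \<subseteq> Q"
        using kA[OF a(1)] pe(3) by (auto simp: in_keys_iff lookup_add)
      have pm: "prod_list (map mvar ps) = (Poly_Mapping.single (mu id ps) 1 :: (nat \<times> nat, 'k) mpoly)"
        using prod_list_mvar[of id ps] by simp
      have "Poly_Mapping.single a (Poly_Mapping.lookup p a) = Poly_Mapping.single e (Poly_Mapping.lookup p a) * prod_list (map mvar ps)"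
        using pe(3) pm by (simp add: mult_single)
      moreover have "prod_list (map mvar ps) \<in> ?G" using pe by blast
      ultimately show "Poly_Mapping.single a (Poly_Mapping.lookup p a) \<in> ideal_gen (polys_in Q) ?G"
        using ke by (auto intro!: ideal_gen_gen polys_in_single)
    qed
    have "h + 0 \<in> set_plus_ideal (ideal_gen (polys_in Q) ?G) (IQ Q)"
      unfolding set_plus_ideal_def IQ_def using hI by (intro CollectI exI[of _ h] exI[of _ 0]) (simp add: phiQ_sig)
    then have "phiQ h \<in> ideal_gen ?XY {?m}" using RL by (auto simp: phiQ_preimage_def)
    then obtain c2 where c2: "phiQ h = c2 * ?m" using ideal_gen_singleton_D by blast
    obtain c1 where c1: "phiQ p = c1 * ?m" using ideal_gen_singleton_D[OF pI] by blast
    have iQ: "i \<in> polys_in Q" unfolding i_def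
      using kA by (intro polys_in_sum polys_in_single) auto
    have phi_i: "phiQ i = (c1 - c2) * ?m"
      using p_eq c1 c2 by (simp add: phiQ_sig msubst_add algebra_simps)
    have m_eq: "?m = Poly_Mapping.single (mu ij ts) 1" by (rule prod_list_mvar)
    have "phiQ i = 0"
    proof (rule ccontr)
      assume "phiQ i \<noteq> 0"
      then obtain x where x: "x \<in> Poly_Mapping.keys (phiQ i)"
        using poly_mapping_eqI[of "phiQ i" 0] by (auto simp: in_keys_iff)
      have "phiQ i = (\<Sum>a\<in>{a\<in>A. \<not> good a}. Poly_Mapping.single (Phi a) (Poly_Mapping.lookup p a))"
        unfolding i_def phiQ_sig msubst_sum by (simp add: phiQ_single[unfolded phiQ_sig])
      then obtain a where a: "a \<in> A" "\<not> good a" "x = Phi a"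
        using x keys_sum[of "\<lambda>a. Poly_Mapping.single (Phi a) (Poly_Mapping.lookup p a)" "{a\<in>A. \<not> good a}"]
        by (auto split: if_splits)
      from x obtain u w where "x = u + w" "w \<in> Poly_Mapping.keys ?m"
        unfolding phi_i using keys_mult by blast
      then have "x = u + mu ij ts" by (simp add: m_eq split: if_splits)
      then have "good a" unfolding good_def a(3)[symmetric] by (simp add: lookup_add)
      with a show False by blast
    qed
    with iQ have "i \<in> IQ Q" by (simp add: IQ_def)
    with hI p_eq show "p \<in> set_plus_ideal (ideal_gen (polys_in Q) ?G) (IQ Q)"
      unfolding set_plus_ideal_def by blast
  qed
  from LR RL show ?thesis by blast
qed

lemma gens_x:
  assumes "Q \<subseteq> {1..r} \<times> {1..s}"
  shows "{prod_list (map (\<lambda>(j,k). mvar (j,k)) (zip js ks')) | ks'.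
                length ks' = length js \<and> set ks' \<subseteq> {1..s} \<and>
                (\<forall>l < length js. (js ! l, ks' ! l) \<in> Q)}
   = {prod_list (map mvar ps) | ps. map fst ps = js \<and> set ps \<subseteq> Q}"
proof (intro set_eqI iffI)
  fix x assume "x \<in> {prod_list (map (\<lambda>(j,k). mvar (j,k)) (zip js ks')) | ks'.
                length ks' = length js \<and> set ks' \<subseteq> {1..s} \<and>
                (\<forall>l < length js. (js ! l, ks' ! l) \<in> Q)}"
  then obtain ks' where k: "x = prod_list (map (\<lambda>(j,k). mvar (j,k)) (zip js ks'))"
    "length ks' = length js" "\<forall>l < length js. (js ! l, ks' ! l) \<in> Q" by blast
  have "set (zip js ks') \<subseteq> Q" using k(2,3) by (auto simp: set_zip)
  moreover have "map fst (zip js ks') = js" using k(2) by simp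
  ultimately show "x \<in> {prod_list (map mvar ps) | ps. map fst ps = js \<and> set ps \<subseteq> Q}"
    using k(1) by (intro CollectI exI[of _ "zip js ks'"]) (simp add: case_prod_eta)
next
  fix x assume "x \<in> {prod_list (map mvar ps) | ps. map fst ps = js \<and> set ps \<subseteq> Q}"
  then obtain ps where p: "x = prod_list (map mvar ps)" "map fst ps = js" "set ps \<subseteq> Q" by blast
  have z: "zip js (map snd ps) = ps" using p(2) zip_map_fst_snd by blast
  have "set (map snd ps) \<subseteq> {1..s}" using p(3) assms by auto
  moreover have "\<forall>l < length js. (js ! l, map snd ps ! l) \<in> Q"
    using p(2,3) by (auto simp flip: p(2))
  ultimately show "x \<in> {prod_list (map (\<lambda>(j,k). mvar (j,k)) (zip js ks')) | ks'.
                length ks' = length js \<and> set ks' \<subseteq> {1..s} \<and>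
                (\<forall>l < length js. (js ! l, ks' ! l) \<in> Q)}"
    using p(1,2) z by (intro CollectI exI[of _ "map snd ps"]) (auto simp: case_prod_eta)
qed

lemma gens_y:
  assumes "Q \<subseteq> {1..r} \<times> {1..s}"
  shows "{prod_list (map (\<lambda>(j,k). mvar (j,k)) (zip js' ks)) | js'.
                length js' = length ks \<and> set js' \<subseteq> {1..r} \<and>
                (\<forall>l < length ks. (js' ! l, ks ! l) \<in> Q)}
   = {prod_list (map mvar ps) | ps. map snd ps = ks \<and> set ps \<subseteq> Q}"
proof (intro set_eqI iffI)
  fix x assume "x \<in> {prod_list (map (\<lambda>(j,k). mvar (j,k)) (zip js' ks)) | js'.
                length js' = length ks \<and> set js' \<subseteq> {1..r} \<and>
                (\<forall>l < length ks. (js' ! l, ks ! l) \<in> Q)}"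
  then obtain js' where k: "x = prod_list (map (\<lambda>(j,k). mvar (j,k)) (zip js' ks))"
    "length js' = length ks" "\<forall>l < length ks. (js' ! l, ks ! l) \<in> Q" by blast
  have "set (zip js' ks) \<subseteq> Q" using k(2,3) by (auto simp: set_zip)
  moreover have "map snd (zip js' ks) = ks" using k(2) by simp
  ultimately show "x \<in> {prod_list (map mvar ps) | ps. map snd ps = ks \<and> set ps \<subseteq> Q}"
    using k(1) by (intro CollectI exI[of _ "zip js' ks"]) (simp add: case_prod_eta)
next
  fix x assume "x \<in> {prod_list (map mvar ps) | ps. map snd ps = ks \<and> set ps \<subseteq> Q}"
  then obtain ps where p: "x = prod_list (map mvar ps)" "map snd ps = ks" "set ps \<subseteq> Q" by blast
  have z: "zip (map fst ps) ks = ps" using p(2) zip_map_fst_snd by blast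
  have "set (map fst ps) \<subseteq> {1..r}" using p(3) assms by auto
  moreover have "\<forall>l < length ks. (map fst ps ! l, ks ! l) \<in> Q"
    using p(2,3) by (auto simp flip: p(2))
  ultimately show "x \<in> {prod_list (map (\<lambda>(j,k). mvar (j,k)) (zip js' ks)) | js'.
                length js' = length ks \<and> set js' \<subseteq> {1..r} \<and>
                (\<forall>l < length ks. (js' ! l, ks ! l) \<in> Q)}"
    using p(1,2) z by (intro CollectI exI[of _ "map fst ps"]) (auto simp: case_prod_eta)
qed

theorem lemma3p5:
  fixes r s :: nat and Q :: "(nat \<times> nat) set"
    and js ks :: "nat list"
  assumes "r > 0" and "s > 0"
    and "Q \<subseteq> {1..r} \<times> {1..s}"
  shows
    "(set js \<subseteq> {1..r} \<longrightarrow>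
      phiQ_preimage Q
        (ideal_gen (polys_in (xy_vars r s)) {prod_list (map (\<lambda>j. mvar (Inl j)) js)})
      = set_plus_ideal
          (ideal_gen (polys_in Q)
             {prod_list (map (\<lambda>(j,k). mvar (j,k)) (zip js ks')) | ks'.
                length ks' = length js \<and> set ks' \<subseteq> {1..s} \<and>
                (\<forall>l < length js. (js ! l, ks' ! l) \<in> Q)})
          (IQ Q :: (nat \<times> nat, 'k::field) mpoly set))
   \<and>
    (set ks \<subseteq> {1..s} \<longrightarrow>
      phiQ_preimage Q
        (ideal_gen (polys_in (xy_vars r s)) {prod_list (map (\<lambda>k. mvar (Inr k)) ks)})
      = set_plus_ideal
          (ideal_gen (polys_in Q)
             {prod_list (map (\<lambda>(j,k). mvar (j,k)) (zip js' ks)) | js'.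
                length js' = length ks \<and> set js' \<subseteq> {1..r} \<and>
                (\<forall>l < length ks. (js' ! l, ks ! l) \<in> Q)})
          (IQ Q :: (nat \<times> nat, 'k::field) mpoly set))"
proof -
  have sx: "side Inl fst" and sy: "side Inr snd" by (simp_all add: side_def)
  show ?thesis
    unfolding gens_x[OF assms(3)] gens_y[OF assms(3)]
    using main[OF assms(3) sx, of js, where 'k='k] main[OF assms(3) sy, of ks, where 'k='k] by simp
qed

end
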